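(* Let $\Omega_3$ be a set with $3$ elements and $v_0:2^{\Omega_3}\to[0,\infty)$ non-decreasing with $v_0(\emptyset)=0$. Define $v_{n+1}(A)=\sup_{\mathcal I\in\Sigma}\mu_{v_n,\mathcal I}(A)$, $A\subset\Omega_3$, $n\ge0$. Then $v_1=v_2=\cdots$ and $v_1$ is submodular.
   Context: $\Sigma$ denotes the set of all chains $\mathcal I\subset2^{\Omega_3}$ (totally ordered by inclusion) containing $\emptyset$ and $\Omega_3$ and generating $2^{\Omega_3}$ as a $\sigma$-algebra (equivalently, maximal chains of subsets). For non-decreasing $v$ and $\mathcal I\in\Sigma$, $\mu_{v,\mathcal I}$ is the unique measure on $2^{\Omega_3}$ with $\mu_{v,\mathcal I}(I)=v(I)$ for $I\in\mathcal I$. Non-decreasing means $v(A)\le v(B)$ for $A\subset B$; submodular means $v(A)+v(B)\ge v(A\cup B)+v(A\cap B)$. *)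

theory Defs
  imports "HOL-Analysis.Analysis"
begin

definition maximal_chains :: "'a set \<Rightarrow> 'a set set set" where
  "maximal_chains \<Omega> =
     {C. C \<subseteq> Pow \<Omega> \<and> (\<forall>A\<in>C. \<forall>B\<in>C. A \<subseteq> B \<or> B \<subseteq> A)
         \<and> {} \<in> C \<and> \<Omega> \<in> C \<and> sigma_sets \<Omega> C = Pow \<Omega>}"

definition chain_measure :: "'a set \<Rightarrow> ('a set \<Rightarrow> real) \<Rightarrow> 'a set set \<Rightarrow> 'a measure" where
  "chain_measure \<Omega> v C =
     (THE \<mu>. sets \<mu> = Pow \<Omega> \<and> (\<forall>I\<in>C. emeasure \<mu> I = ennreal (v I)))"

definition next_v :: "'a set \<Rightarrow> ('a set \<Rightarrow> real) \<Rightarrow> ('a set \<Rightarrow> real)" where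
  "next_v \<Omega> v = (\<lambda>A. SUP C\<in>maximal_chains \<Omega>. measure (chain_measure \<Omega> v C) A)"

definition non_decreasing_on :: "'a set \<Rightarrow> ('a set \<Rightarrow> real) \<Rightarrow> bool" where
  "non_decreasing_on \<Omega> v = (\<forall>A B. A \<subseteq> B \<and> B \<subseteq> \<Omega> \<longrightarrow> v A \<le> v B)"

definition submodular_on :: "'a set \<Rightarrow> ('a set \<Rightarrow> real) \<Rightarrow> bool" where
  "submodular_on \<Omega> v =
     (\<forall>A B. A \<subseteq> \<Omega> \<and> B \<subseteq> \<Omega> \<longrightarrow> v A + v B \<ge> v (A \<union> B) + v (A \<inter> B))"

end

theory Submission
  imports Defs
begin



definition perm3 :: "'a set \<Rightarrow> 'a \<Rightarrow> 'a \<Rightarrow> 'a \<Rightarrow> bool" where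
  "perm3 \<Omega> p q r = (p \<noteq> q \<and> p \<noteq> r \<and> q \<noteq> r \<and> \<Omega> = {p, q, r})"

definition mass :: "'a set \<Rightarrow> ('a set \<Rightarrow> real) \<Rightarrow> 'a \<Rightarrow> 'a \<Rightarrow> 'a \<Rightarrow> real" where
  "mass \<Omega> w p q i = (if i = p then w {p} else if i = q then w {p, q} - w {p} else w \<Omega> - w {p, q})"

lemma subset3:
  assumes "perm3 \<Omega> a b c" "A \<subseteq> \<Omega>"
  shows "A = {} \<or> A = {a} \<or> A = {b} \<or> A = {c} \<or> A = {a,b} \<or> A = {a,c} \<or> A = {b,c} \<or> A = \<Omega>"
proof -
  have O: "\<Omega> = {a,b,c}" using assms(1) unfolding perm3_def by auto
  have "A \<in> Pow {a,b,c}" using assms O by auto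
  then show ?thesis unfolding O by (simp add: Pow_insert insert_commute)
qed

lemma sep:
  assumes "C \<subseteq> Pow \<Omega>" "x \<in> \<Omega>" "y \<in> \<Omega>" "\<forall>I\<in>C. (x \<in> I \<longleftrightarrow> y \<in> I)"
    and "X \<in> sigma_sets \<Omega> C"
  shows "x \<in> X \<longleftrightarrow> y \<in> X"
  using assms(5)
proof (induction rule: sigma_sets.induct)
  case (Basic a) then show ?case using assms(4) by blast
next
  case Empty then show ?case by simp
next
  case (Compl a) then show ?case using assms(2,3) by blast
next
  case (Union a) then show ?case by blast
qed

lemma chain_in:
  assumes "perm3 \<Omega> p q r"
  shows "{{}, {p}, {p,q}, \<Omega>} \<in> maximal_chains \<Omega>"
proof -
  let ?C = "{{}, {p}, {p,q}, \<Omega>}"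
  have Om: "\<Omega> = {p,q,r}" and d: "p \<noteq> q" "p \<noteq> r" "q \<noteq> r" using assms unfolding perm3_def by auto
  have CP: "?C \<subseteq> Pow \<Omega>" using Om by auto
  interpret S: sigma_algebra \<Omega> "sigma_sets \<Omega> ?C" using sigma_algebra_sigma_sets[OF CP] .
  have sp: "{p} \<in> sigma_sets \<Omega> ?C" by (rule sigma_sets.Basic) auto
  have spq: "{p,q} \<in> sigma_sets \<Omega> ?C" by (rule sigma_sets.Basic) auto
  have sO: "\<Omega> \<in> sigma_sets \<Omega> ?C" by (rule sigma_sets.Basic) auto
  have sq: "{q} \<in> sigma_sets \<Omega> ?C"
  proof -
    have "{p,q} - {p} = {q}" using d by auto
    then show ?thesis using S.Diff[OF spq sp] by simp
  qed
  have sr: "{r} \<in> sigma_sets \<Omega> ?C"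
  proof -
    have "\<Omega> - {p,q} = {r}" using d Om by auto
    then show ?thesis using S.Diff[OF sO spq] by simp
  qed
  have single: "\<And>s X. s \<in> \<Omega> \<Longrightarrow> X \<inter> {s} \<in> sigma_sets \<Omega> ?C"
  proof -
    fix s X assume "s \<in> \<Omega>"
    then have s1: "{s} \<in> sigma_sets \<Omega> ?C" using sp sq sr Om by auto
    show "X \<inter> {s} \<in> sigma_sets \<Omega> ?C"
      by (cases "s \<in> X") (auto simp: s1 S.empty_sets)
  qed
  have "Pow \<Omega> \<subseteq> sigma_sets \<Omega> ?C"
  proof
    fix X assume "X \<in> Pow \<Omega>"
    then have "X = (X \<inter> {p}) \<union> (X \<inter> {q}) \<union> (X \<inter> {r})" using Om by auto
    moreover have "(X \<inter> {p}) \<union> (X \<inter> {q}) \<union> (X \<inter> {r}) \<in> sigma_sets \<Omega> ?C"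
      using single Om by (intro S.Un) auto
    ultimately show "X \<in> sigma_sets \<Omega> ?C" by simp
  qed
  moreover have "sigma_sets \<Omega> ?C \<subseteq> Pow \<Omega>" using sigma_sets_into_sp[OF CP] by blast
  ultimately have "sigma_sets \<Omega> ?C = Pow \<Omega>" by blast
  then show ?thesis unfolding maximal_chains_def using CP Om by auto
qed

lemma chain_char:
  assumes "perm3 \<Omega> a b c" "C \<in> maximal_chains \<Omega>"
  shows "\<exists>p q r. perm3 \<Omega> p q r \<and> C = {{}, {p}, {p,q}, \<Omega>}"
proof -
  have Om: "\<Omega> = {a,b,c}" using assms(1) unfolding perm3_def by auto
  have fin: "finite \<Omega>" using Om by simp
  have CP: "C \<subseteq> Pow \<Omega>" and ch: "\<forall>A\<in>C. \<forall>B\<in>C. A \<subseteq> B \<or> B \<subseteq> A"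
    and e: "{} \<in> C" and o: "\<Omega> \<in> C" and sg: "sigma_sets \<Omega> C = Pow \<Omega>"
    using assms(2) unfolding maximal_chains_def by auto
  have finC: "finite C" using CP fin by (meson finite_Pow_iff rev_finite_subset)
  have sepC: "\<exists>I\<in>C. \<not> (x \<in> I \<longleftrightarrow> y \<in> I)" if "x \<in> \<Omega>" "y \<in> \<Omega>" "x \<noteq> y" for x y
  proof (rule ccontr)
    assume "\<not> ?thesis"
    then have "\<forall>I\<in>C. (x \<in> I \<longleftrightarrow> y \<in> I)" by blast
    moreover have "{x} \<in> sigma_sets \<Omega> C" using sg that by auto
    ultimately have "x \<in> {x} \<longleftrightarrow> y \<in> {x}" using sep[OF CP that(1,2)] by blast
    then show False using that by auto
  qed
  have ne1: "C - {{}} \<noteq> {}" using o Om by auto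
  obtain M where M: "M \<in> C - {{}}" and Mmin: "\<forall>I\<in>C - {{}}. I \<subseteq> M \<longrightarrow> M = I"
    using finite_has_minimal[OF _ ne1] finC by blast
  have "\<exists>p. M = {p}"
  proof -
    have "M \<noteq> {}" using M by auto
    moreover have "u = v" if "u \<in> M" "v \<in> M" for u v
    proof (rule ccontr)
      assume "u \<noteq> v"
      moreover have "u \<in> \<Omega>" "v \<in> \<Omega>" using that M CP by auto
      ultimately obtain I where I: "I \<in> C" "\<not> (u \<in> I \<longleftrightarrow> v \<in> I)" using sepC by blast
      have "M \<subseteq> I \<or> I \<subseteq> M" using ch I M by auto
      then show False
      proof
        assume "M \<subseteq> I" then show False using I that by auto
      next
        assume "I \<subseteq> M"
        moreover have "I \<noteq> {}" using I by auto
        ultimately have "M = I" using Mmin I by auto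
        then show False using I that by auto
      qed
    qed
    ultimately show ?thesis by blast
  qed
  then obtain p where p: "M = {p}" by blast
  have ne2: "C - {\<Omega>} \<noteq> {}" using e Om by auto
  obtain N where N: "N \<in> C - {\<Omega>}" and Nmax: "\<forall>I\<in>C - {\<Omega>}. N \<subseteq> I \<longrightarrow> N = I"
    using finite_has_maximal[OF _ ne2] finC by blast
  have NO: "N \<subseteq> \<Omega>" "N \<noteq> \<Omega>" using N CP by auto
  have "\<exists>r. \<Omega> - N = {r}"
  proof -
    have "\<Omega> - N \<noteq> {}" using NO by auto
    moreover have "u = v" if "u \<in> \<Omega> - N" "v \<in> \<Omega> - N" for u v
    proof (rule ccontr)
      assume "u \<noteq> v"
      moreover have "u \<in> \<Omega>" "v \<in> \<Omega>" using that by auto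
      ultimately obtain I where I: "I \<in> C" "\<not> (u \<in> I \<longleftrightarrow> v \<in> I)" using sepC by blast
      have "N \<subseteq> I \<or> I \<subseteq> N" using ch I N by auto
      then show False
      proof
        assume "I \<subseteq> N" then show False using I that by auto
      next
        assume "N \<subseteq> I"
        moreover have "I \<noteq> \<Omega>" using I that by auto
        ultimately have "N = I" using Nmax I by auto
        then show False using I that by auto
      qed
    qed
    ultimately show ?thesis by blast
  qed
  then obtain r where r: "\<Omega> - N = {r}" by blast
  have "M \<subseteq> N \<or> N \<subseteq> M" using ch M N by auto
  moreover have "\<not> N \<subseteq> {p}"
  proof
    assume "N \<subseteq> {p}"
    then have "\<Omega> \<subseteq> {p, r}" using r by auto
    then show False using Om assms(1) unfolding perm3_def
      by (metis insert_subset singletonD insertE)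
  qed
  ultimately have pN: "p \<in> N" using p by auto
  have pr: "p \<noteq> r" using pN r by auto
  have rO: "r \<in> \<Omega>" using r by auto
  have pO: "p \<in> \<Omega>" using pN NO by auto
  obtain q where q: "q \<in> \<Omega>" "q \<noteq> p" "q \<noteq> r"
    using Om pO rO pr assms(1) unfolding perm3_def by blast
  have P: "perm3 \<Omega> p q r"
    using Om pO rO pr q assms(1) unfolding perm3_def by auto
  have Neq: "N = {p,q}"
    using r P NO unfolding perm3_def by auto
  have "C = {{}, {p}, {p,q}, \<Omega>}"
  proof
    show "{{}, {p}, {p,q}, \<Omega>} \<subseteq> C" using e o M N p Neq by auto
  next
    show "C \<subseteq> {{}, {p}, {p,q}, \<Omega>}"
    proof
      fix T assume T: "T \<in> C"
      show "T \<in> {{}, {p}, {p,q}, \<Omega>}"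
      proof (cases "T = {} \<or> T = \<Omega>")
        case True then show ?thesis by auto
      next
        case False
        have c1: "T \<subseteq> {p} \<or> {p} \<subseteq> T" using ch T M p by auto
        have c2: "T \<subseteq> N \<or> N \<subseteq> T" using ch T N by auto
        have "T \<subseteq> {p} \<Longrightarrow> T = {p}" using False by auto
        moreover have "N \<subseteq> T \<Longrightarrow> T = N" using Nmax T False by auto
        moreover have "T \<subseteq> {p,q}" if "{p} \<subseteq> T" "T \<subseteq> N" using that Neq by auto
        ultimately show ?thesis using c1 c2 Neq by auto
      qed
    qed
  qed
  then show ?thesis using P by blast
qed


lemma ennreal_sub_aux:
  assumes "ennreal a + x = ennreal b" "0 \<le> a" "a \<le> b"
  shows "x = ennreal (b - a)"
proof -
  have "x \<noteq> \<infinity>"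
  proof
    assume "x = \<infinity>"
    then have "ennreal a + x = \<infinity>" by simp
    then show False using assms(1) by simp
  qed
  then obtain t where t: "x = ennreal t" "0 \<le> t" by (cases x) auto
  have e: "ennreal (a + t) = ennreal b" using assms(1) t(1) ennreal_plus[OF assms(2) t(2)] by simp
  have "a + t = b" using ennreal_inj[of "a+t" b] e assms t by simp
  then show ?thesis using t by simp
qed

lemma nonneg_of_mono:
  assumes "non_decreasing_on \<Omega> w" "w {} = 0" "A \<subseteq> \<Omega>"
  shows "0 \<le> w A"
  using assms unfolding non_decreasing_on_def by (metis empty_subsetI)

lemma cm:
  assumes P: "perm3 \<Omega> p q r" and mono: "non_decreasing_on \<Omega> w" and w0: "w {} = 0"
    and A: "A \<subseteq> \<Omega>"
  shows "measure (chain_measure \<Omega> w {{}, {p}, {p,q}, \<Omega>}) A = sum (mass \<Omega> w p q) A"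
proof -
  have Om: "\<Omega> = {p,q,r}" and d: "p \<noteq> q" "p \<noteq> r" "q \<noteq> r" using P unfolding perm3_def by auto
  have fin: "finite \<Omega>" using Om by simp
  have md: "\<And>A B. A \<subseteq> B \<Longrightarrow> B \<subseteq> \<Omega> \<Longrightarrow> w A \<le> w B"
    using mono unfolding non_decreasing_on_def by blast
  have m1: "w {} \<le> w {p}" "w {p} \<le> w {p,q}" "w {p,q} \<le> w \<Omega>"
    by (rule md; simp add: Om)+
  have mnn: "0 \<le> mass \<Omega> w p q i" for i
    using m1 w0 unfolding mass_def by auto
  define M where "M = point_measure \<Omega> (\<lambda>i. ennreal (mass \<Omega> w p q i))"
  have sM: "sets M = Pow \<Omega>" unfolding M_def by (simp add: sets_point_measure)
  have eM: "emeasure M X = ennreal (sum (mass \<Omega> w p q) X)" if "X \<subseteq> \<Omega>" for X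
    unfolding M_def using that fin mnn
    by (simp add: emeasure_point_measure_finite sum_ennreal)
  let ?C = "{{}, {p}, {p,q}, \<Omega>}"
  have propM: "sets M = Pow \<Omega> \<and> (\<forall>I\<in>?C. emeasure M I = ennreal (w I))"
  proof -
    have "emeasure M {} = ennreal (w {})" using w0 by simp
    moreover have "emeasure M {p} = ennreal (w {p})" using eM[of "{p}"] Om by (simp add: mass_def)
    moreover have "emeasure M {p,q} = ennreal (w {p,q})" using eM[of "{p,q}"] Om d by (simp add: mass_def)
    moreover have "emeasure M \<Omega> = ennreal (w \<Omega>)" using eM[of "\<Omega>"] Om d by (simp add: mass_def)
    ultimately show ?thesis using sM by auto
  qed
  have uniq: "\<mu> = M" if "sets \<mu> = Pow \<Omega> \<and> (\<forall>I\<in>?C. emeasure \<mu> I = ennreal (w I))" for \<mu>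
  proof (rule measure_eqI_finite[OF _ sM fin])
    show "sets \<mu> = Pow \<Omega>" using that by simp
    have e1: "emeasure \<mu> {p} = ennreal (w {p})" "emeasure \<mu> {p,q} = ennreal (w {p,q})"
      "emeasure \<mu> \<Omega> = ennreal (w \<Omega>)" using that by auto
    have s: "X \<in> sets \<mu>" if "X \<subseteq> \<Omega>" for X using that \<open>sets \<mu> = Pow \<Omega>\<close> by auto
    have "emeasure \<mu> {p} + emeasure \<mu> {q} = emeasure \<mu> ({p} \<union> {q})"
      by (rule plus_emeasure) (use s Om d in auto)
    moreover have "{p} \<union> {q} = {p,q}" by auto
    ultimately have "ennreal (w {p}) + emeasure \<mu> {q} = ennreal (w {p,q})" using e1 by simp
    then have eq: "emeasure \<mu> {q} = ennreal (w {p,q} - w {p})"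
      by (rule ennreal_sub_aux) (use m1 w0 in auto)
    have "emeasure \<mu> {p,q} + emeasure \<mu> {r} = emeasure \<mu> ({p,q} \<union> {r})"
      by (rule plus_emeasure) (use s Om d in auto)
    moreover have "{p,q} \<union> {r} = \<Omega>" using Om by auto
    ultimately have "ennreal (w {p,q}) + emeasure \<mu> {r} = ennreal (w \<Omega>)" using e1 by simp
    then have er: "emeasure \<mu> {r} = ennreal (w \<Omega> - w {p,q})"
      by (rule ennreal_sub_aux) (use m1 w0 in auto)
    fix a assume "a \<in> \<Omega>"
    then have "a = p \<or> a = q \<or> a = r" using Om by auto
    then show "emeasure \<mu> {a} = emeasure M {a}"
      using e1 eq er eM[of "{a}"] Om d by (auto simp: mass_def)
  qed
  have "chain_measure \<Omega> w ?C = M"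
    unfolding chain_measure_def
    by (rule the_equality, rule propM, erule uniq)
  then have "measure (chain_measure \<Omega> w ?C) A = enn2real (emeasure M A)"
    by (simp add: measure_def)
  also have "\<dots> = enn2real (ennreal (sum (mass \<Omega> w p q) A))"
    using eM[OF A] by simp
  also have "\<dots> = sum (mass \<Omega> w p q) A"
  proof -
    have "0 \<le> sum (mass \<Omega> w p q) A" by (rule sum_nonneg) (rule mnn)
    then show ?thesis by simp
  qed
  finally show ?thesis .
qed

lemma nv:
  assumes P0: "perm3 \<Omega> a b c" and mono: "non_decreasing_on \<Omega> w" and w0: "w {} = 0"
    and A: "A \<subseteq> \<Omega>"
  shows nv_lb: "\<And>p q r. perm3 \<Omega> p q r \<Longrightarrow> sum (mass \<Omega> w p q) A \<le> next_v \<Omega> w A"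
    and nv_ex: "\<exists>p q r. perm3 \<Omega> p q r \<and> next_v \<Omega> w A = sum (mass \<Omega> w p q) A"
proof -
  define F where "F C = measure (chain_measure \<Omega> w C) A" for C
  have Om: "\<Omega> = {a,b,c}" using P0 unfolding perm3_def by auto
  have fin: "finite (maximal_chains \<Omega>)"
  proof -
    have "maximal_chains \<Omega> \<subseteq> Pow (Pow \<Omega>)" unfolding maximal_chains_def by auto
    moreover have "finite (Pow (Pow \<Omega>))" using Om by simp
    ultimately show ?thesis by (rule finite_subset)
  qed
  have ne: "maximal_chains \<Omega> \<noteq> {}" using chain_in[OF P0] by auto
  have nvF: "next_v \<Omega> w A = Sup (F ` maximal_chains \<Omega>)" unfolding next_v_def F_def by simp
  show "sum (mass \<Omega> w p q) A \<le> next_v \<Omega> w A" if P: "perm3 \<Omega> p q r" for p q r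
  proof -
    have "F {{}, {p}, {p,q}, \<Omega>} \<le> Sup (F ` maximal_chains \<Omega>)"
      by (rule cSup_upper) (use chain_in[OF P] fin in auto)
    then show ?thesis using cm[OF P mono w0 A] nvF unfolding F_def by simp
  qed
  have "Sup (F ` maximal_chains \<Omega>) \<in> F ` maximal_chains \<Omega>"
    using cSup_eq_Max[of "F ` maximal_chains \<Omega>"] Max_in[of "F ` maximal_chains \<Omega>"] fin ne by auto
  then obtain C where C: "C \<in> maximal_chains \<Omega>" "next_v \<Omega> w A = F C" using nvF by auto
  obtain p q r where P: "perm3 \<Omega> p q r" and Ceq: "C = {{}, {p}, {p,q}, \<Omega>}"
    using chain_char[OF P0 C(1)] by blast
  show "\<exists>p q r. perm3 \<Omega> p q r \<and> next_v \<Omega> w A = sum (mass \<Omega> w p q) A"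
    using P C(2) Ceq cm[OF P mono w0 A] unfolding F_def
    by (intro exI[of _ p] exI[of _ q] exI[of _ r]) simp
qed

lemma perm3_all:
  assumes "perm3 \<Omega> a b c"
  shows "perm3 \<Omega> a c b" "perm3 \<Omega> b a c" "perm3 \<Omega> b c a" "perm3 \<Omega> c a b" "perm3 \<Omega> c b a"
  using assms unfolding perm3_def by (auto simp: insert_commute)

lemma perm_cases:
  assumes "perm3 \<Omega> p q r" "perm3 \<Omega> x y z"
  shows "(x = p \<and> y = q \<and> z = r) \<or> (x = p \<and> y = r \<and> z = q) \<or> (x = q \<and> y = p \<and> z = r)
      \<or> (x = q \<and> y = r \<and> z = p) \<or> (x = r \<and> y = p \<and> z = q) \<or> (x = r \<and> y = q \<and> z = p)"
proof -
  have "x \<in> {p,q,r}" "y \<in> {p,q,r}" "z \<in> {p,q,r}" "x \<noteq> y" "x \<noteq> z" "y \<noteq> z"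
    using assms unfolding perm3_def by auto
  then show ?thesis by auto
qed

lemma sums:
  assumes "perm3 \<Omega> p q r"
  shows "sum (mass \<Omega> w p q) {} = 0"
    and "sum (mass \<Omega> w p q) {p} = w {p}"
    and "sum (mass \<Omega> w p q) {q} = w {p,q} - w {p}"
    and "sum (mass \<Omega> w p q) {r} = w \<Omega> - w {p,q}"
    and "sum (mass \<Omega> w p q) {p,q} = w {p,q}"
    and "sum (mass \<Omega> w p q) {p,r} = w {p} + (w \<Omega> - w {p,q})"
    and "sum (mass \<Omega> w p q) {q,r} = w \<Omega> - w {p}"
    and "sum (mass \<Omega> w p q) \<Omega> = w \<Omega>"
proof -
  have Om: "\<Omega> = {p,q,r}" and d: "p \<noteq> q" "p \<noteq> r" "q \<noteq> r" "q \<noteq> p" "r \<noteq> p" "r \<noteq> q"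
    using assms unfolding perm3_def by auto
  show "sum (mass \<Omega> w p q) {} = 0" by simp
  show "sum (mass \<Omega> w p q) {p} = w {p}" by (simp add: mass_def)
  show "sum (mass \<Omega> w p q) {q} = w {p,q} - w {p}" using d by (simp add: mass_def)
  show "sum (mass \<Omega> w p q) {r} = w \<Omega> - w {p,q}" using d by (simp add: mass_def)
  show "sum (mass \<Omega> w p q) {p,q} = w {p,q}" using d by (simp add: mass_def)
  show "sum (mass \<Omega> w p q) {p,r} = w {p} + (w \<Omega> - w {p,q})" using d by (simp add: mass_def)
  show "sum (mass \<Omega> w p q) {q,r} = w \<Omega> - w {p}" using d by (simp add: mass_def)
  have "sum (mass \<Omega> w p q) \<Omega> = mass \<Omega> w p q p + mass \<Omega> w p q q + mass \<Omega> w p q r"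
    using d by (simp add: Om)
  then show "sum (mass \<Omega> w p q) \<Omega> = w \<Omega>" using d by (simp add: mass_def)
qed

lemma mass_nonneg:
  assumes P: "perm3 \<Omega> p q r" and mono: "non_decreasing_on \<Omega> w" and w0: "w {} = 0"
  shows "0 \<le> mass \<Omega> w p q i"
proof -
  have Om: "\<Omega> = {p,q,r}" using P unfolding perm3_def by auto
  have md: "\<And>A B. A \<subseteq> B \<Longrightarrow> B \<subseteq> \<Omega> \<Longrightarrow> w A \<le> w B"
    using mono unfolding non_decreasing_on_def by blast
  have m1: "w {} \<le> w {p}" "w {p} \<le> w {p,q}" "w {p,q} \<le> w \<Omega>"
    by (rule md; simp add: Om)+
  then show ?thesis using w0 unfolding mass_def by auto
qed

lemma next_props:
  assumes P0: "perm3 \<Omega> a b c" and mono: "non_decreasing_on \<Omega> w" and w0: "w {} = 0"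
  shows "non_decreasing_on \<Omega> (next_v \<Omega> w)" and "next_v \<Omega> w {} = 0"
proof -
  obtain p q r where P: "perm3 \<Omega> p q r" and e: "next_v \<Omega> w {} = sum (mass \<Omega> w p q) {}"
    using nv_ex[OF P0 mono w0, of "{}"] by auto
  then show "next_v \<Omega> w {} = 0" by simp
  have fin: "finite \<Omega>" using P0 unfolding perm3_def by auto
  show "non_decreasing_on \<Omega> (next_v \<Omega> w)"
    unfolding non_decreasing_on_def
  proof (intro allI impI, elim conjE)
    fix A B assume AB: "A \<subseteq> B" "B \<subseteq> \<Omega>"
    then have A: "A \<subseteq> \<Omega>" by auto
    obtain p q r where P: "perm3 \<Omega> p q r" and e: "next_v \<Omega> w A = sum (mass \<Omega> w p q) A"
      using nv_ex[OF P0 mono w0 A] by auto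
    have "sum (mass \<Omega> w p q) A \<le> sum (mass \<Omega> w p q) B"
      by (rule sum_mono2) (use fin AB mass_nonneg[OF P mono w0] finite_subset in auto)
    also have "\<dots> \<le> next_v \<Omega> w B" by (rule nv_lb[OF P0 mono w0 AB(2) P])
    finally show "next_v \<Omega> w A \<le> next_v \<Omega> w B" using e by simp
  qed
qed

lemma fixpoint:
  assumes P0: "perm3 \<Omega> a b c" and mono: "non_decreasing_on \<Omega> w" and w0: "w {} = 0"
    and sm: "submodular_on \<Omega> w" and A: "A \<subseteq> \<Omega>"
  shows "next_v \<Omega> w A = w A"
proof (rule antisym)
  have smi: "\<And>X Y. X \<subseteq> \<Omega> \<Longrightarrow> Y \<subseteq> \<Omega> \<Longrightarrow> w (X \<union> Y) + w (X \<inter> Y) \<le> w X + w Y"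
    using sm unfolding submodular_on_def by auto
  obtain p q r where P: "perm3 \<Omega> p q r" and e: "next_v \<Omega> w A = sum (mass \<Omega> w p q) A"
    using nv_ex[OF P0 mono w0 A] by auto
  have Om: "\<Omega> = {p,q,r}" and d: "p \<noteq> q" "p \<noteq> r" "q \<noteq> r"
    using P unfolding perm3_def by auto
  have s1: "w {p,q} + w {} \<le> w {p} + w {q}"
  proof -
    have u: "{p} \<union> {q} = {p,q}" and i: "{p} \<inter> {q} = {}" using d by auto
    have "w ({p} \<union> {q}) + w ({p} \<inter> {q}) \<le> w {p} + w {q}" by (rule smi) (simp_all add: Om)
    then show ?thesis by (simp only: u i)
  qed
  have s2: "w \<Omega> + w {} \<le> w {p,q} + w {r}"
  proof -
    have u: "{p,q} \<union> {r} = \<Omega>" and i: "{p,q} \<inter> {r} = {}" using d Om by auto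
    have "w ({p,q} \<union> {r}) + w ({p,q} \<inter> {r}) \<le> w {p,q} + w {r}" by (rule smi) (simp_all add: Om)
    then show ?thesis by (simp only: u i)
  qed
  have s3: "w \<Omega> + w {p} \<le> w {p,q} + w {p,r}"
  proof -
    have u: "{p,q} \<union> {p,r} = \<Omega>" and i: "{p,q} \<inter> {p,r} = {p}" using d Om by auto
    have "w ({p,q} \<union> {p,r}) + w ({p,q} \<inter> {p,r}) \<le> w {p,q} + w {p,r}" by (rule smi) (simp_all add: Om)
    then show ?thesis by (simp only: u i)
  qed
  have s4: "w \<Omega> + w {} \<le> w {p} + w {q,r}"
  proof -
    have u: "{p} \<union> {q,r} = \<Omega>" and i: "{p} \<inter> {q,r} = {}" using d Om by auto
    have "w ({p} \<union> {q,r}) + w ({p} \<inter> {q,r}) \<le> w {p} + w {q,r}" by (rule smi) (simp_all add: Om)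
    then show ?thesis by (simp only: u i)
  qed
  show "next_v \<Omega> w A \<le> w A"
    using subset3[OF P A] e sums[OF P, of w] s1 s2 s3 s4 w0
    by (elim disjE; simp)
  show "w A \<le> next_v \<Omega> w A"
  proof -
    note pa = perm3_all[OF P0]
    have lb: "\<And>x y z. perm3 \<Omega> x y z \<Longrightarrow> sum (mass \<Omega> w x y) A \<le> next_v \<Omega> w A"
      using nv_lb[OF P0 mono w0 A] by blast
    show ?thesis
      using subset3[OF P0 A]
    proof (elim disjE)
      assume "A = {}" then show ?thesis using lb[OF P0] sums(1)[OF P0, of w] w0 by simp
    next
      assume "A = {a}" then show ?thesis using lb[OF P0] sums(2)[OF P0, of w] by simp
    next
      assume "A = {b}" then show ?thesis using lb[OF pa(2)] sums(2)[OF pa(2), of w] by simp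
    next
      assume "A = {c}" then show ?thesis using lb[OF pa(4)] sums(2)[OF pa(4), of w] by simp
    next
      assume "A = {a,b}" then show ?thesis using lb[OF P0] sums(5)[OF P0, of w] by simp
    next
      assume "A = {a,c}" then show ?thesis using lb[OF pa(1)] sums(5)[OF pa(1), of w] by simp
    next
      assume "A = {b,c}" then show ?thesis using lb[OF pa(3)] sums(5)[OF pa(3), of w] by simp
    next
      assume "A = \<Omega>" then show ?thesis using lb[OF P0] sums(8)[OF P0, of w] by simp
    qed
  qed
qed


lemma v1_facts:
  assumes P0: "perm3 \<Omega> a b c" and mono: "non_decreasing_on \<Omega> w" and w0: "w {} = 0"
    and P: "perm3 \<Omega> p q r"
  shows "next_v \<Omega> w {p,q} \<le> next_v \<Omega> w {p} + next_v \<Omega> w {q}"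
    and "next_v \<Omega> w \<Omega> \<le> next_v \<Omega> w {p} + next_v \<Omega> w {q,r}"
    and "next_v \<Omega> w \<Omega> + next_v \<Omega> w {p} \<le> next_v \<Omega> w {p,q} + next_v \<Omega> w {p,r}"
proof -
  have Om: "\<Omega> = {p,q,r}" and d: "p \<noteq> q" "p \<noteq> r" "q \<noteq> r" using P unfolding perm3_def by auto
  have sb: "{p} \<subseteq> \<Omega>" "{q} \<subseteq> \<Omega>" "{r} \<subseteq> \<Omega>" "{p,q} \<subseteq> \<Omega>" "{p,r} \<subseteq> \<Omega>" "{q,r} \<subseteq> \<Omega>"
    using Om by auto
  have vO: "next_v \<Omega> w \<Omega> = w \<Omega>"
  proof -
    obtain x y z where Px: "perm3 \<Omega> x y z" and e: "next_v \<Omega> w \<Omega> = sum (mass \<Omega> w x y) \<Omega>"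
      using nv_ex[OF P0 mono w0, of \<Omega>] by auto
    then show ?thesis using sums(8)[OF Px] by simp
  qed
  show "next_v \<Omega> w \<Omega> \<le> next_v \<Omega> w {p} + next_v \<Omega> w {q,r}"
    using nv_lb[OF P0 mono w0 sb(1) P] nv_lb[OF P0 mono w0 sb(6) P] sums(2,7)[OF P, of w] vO
    by simp
  show "next_v \<Omega> w {p,q} \<le> next_v \<Omega> w {p} + next_v \<Omega> w {q}"
  proof -
    obtain x y z where Px: "perm3 \<Omega> x y z" and e: "next_v \<Omega> w {p,q} = sum (mass \<Omega> w x y) {p,q}"
      using nv_ex[OF P0 mono w0 sb(4)] by auto
    have "sum (mass \<Omega> w x y) {p,q} = mass \<Omega> w x y p + mass \<Omega> w x y q" using d by simp
    moreover have "mass \<Omega> w x y p \<le> next_v \<Omega> w {p}" using nv_lb[OF P0 mono w0 sb(1) Px] by simp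
    moreover have "mass \<Omega> w x y q \<le> next_v \<Omega> w {q}" using nv_lb[OF P0 mono w0 sb(2) Px] by simp
    ultimately show ?thesis using e by linarith
  qed
  show "next_v \<Omega> w \<Omega> + next_v \<Omega> w {p} \<le> next_v \<Omega> w {p,q} + next_v \<Omega> w {p,r}"
  proof -
    obtain x y z where Px: "perm3 \<Omega> x y z" and e: "next_v \<Omega> w {p} = sum (mass \<Omega> w x y) {p}"
      using nv_ex[OF P0 mono w0 sb(1)] by auto
    have tot: "mass \<Omega> w x y p + mass \<Omega> w x y q + mass \<Omega> w x y r = w \<Omega>"
    proof -
      have "sum (mass \<Omega> w x y) {p,q,r} = mass \<Omega> w x y p + mass \<Omega> w x y q + mass \<Omega> w x y r"
        using d by simp
      then show ?thesis using sums(8)[OF Px, of w] Om by simp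
    qed
    have "sum (mass \<Omega> w x y) {p,q} = mass \<Omega> w x y p + mass \<Omega> w x y q" using d by simp
    then have 1: "mass \<Omega> w x y p + mass \<Omega> w x y q \<le> next_v \<Omega> w {p,q}"
      using nv_lb[OF P0 mono w0 sb(4) Px] by simp
    have "sum (mass \<Omega> w x y) {p,r} = mass \<Omega> w x y p + mass \<Omega> w x y r" using d by simp
    then have 2: "mass \<Omega> w x y p + mass \<Omega> w x y r \<le> next_v \<Omega> w {p,r}"
      using nv_lb[OF P0 mono w0 sb(5) Px] by simp
    show ?thesis using e tot 1 2 vO by simp
  qed
qed

lemma submod_from3:
  assumes P0: "perm3 \<Omega> a b c" and w0: "w {} = 0"
    and H: "\<And>p q r. perm3 \<Omega> p q r \<Longrightarrow> w {p,q} \<le> w {p} + w {q} \<and> w \<Omega> \<le> w {p} + w {q,r}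
            \<and> w \<Omega> + w {p} \<le> w {p,q} + w {p,r}"
  shows "submodular_on \<Omega> w"
  unfolding submodular_on_def
proof (intro allI impI, elim conjE)
  fix A B assume A: "A \<subseteq> \<Omega>" and B: "B \<subseteq> \<Omega>"
  show "w (A \<union> B) + w (A \<inter> B) \<le> w A + w B"
  proof (cases "A \<subseteq> B \<or> B \<subseteq> A")
    case True
    then show ?thesis by (auto simp: Un_absorb1 Un_absorb2 Int_absorb1 Int_absorb2)
  next
    case False
    note pa = perm3_all[OF P0]
    have Om: "\<Omega> = {a,b,c}" and d: "a \<noteq> b" "a \<noteq> c" "b \<noteq> c" "b \<noteq> a" "c \<noteq> a" "c \<noteq> b"
      using P0 unfolding perm3_def by auto
    note HH = H[OF P0] H[OF pa(1)] H[OF pa(2)] H[OF pa(3)] H[OF pa(4)] H[OF pa(5)]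
    note HH' = HH[unfolded Om, simplified insert_commute]
    show ?thesis
      using subset3[OF P0 A] subset3[OF P0 B] False
      apply (elim disjE)
      apply (simp_all only: Om)
      apply (simp_all add: d insert_commute)
      using HH' w0 by auto
  qed
qed


lemma next_congr:
  assumes "\<forall>A. A \<subseteq> \<Omega> \<longrightarrow> w A = w' A"
  shows "next_v \<Omega> w = next_v \<Omega> w'"
proof -
  have cmeq: "chain_measure \<Omega> w C = chain_measure \<Omega> w' C" if "C \<in> maximal_chains \<Omega>" for C
  proof -
    have "C \<subseteq> Pow \<Omega>" using that unfolding maximal_chains_def by auto
    then have "\<forall>I\<in>C. w I = w' I" using assms by auto
    then have "\<And>\<mu>. (sets \<mu> = Pow \<Omega> \<and> (\<forall>I\<in>C. emeasure \<mu> I = ennreal (w I))) =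
                   (sets \<mu> = Pow \<Omega> \<and> (\<forall>I\<in>C. emeasure \<mu> I = ennreal (w' I)))" by auto
    then show ?thesis unfolding chain_measure_def by (simp only:)
  qed
  show ?thesis unfolding next_v_def
    by (intro ext SUP_cong refl) (simp add: cmeq)
qed

theorem corollary22:
  fixes \<Omega> :: "'a set" and v0 :: "'a set \<Rightarrow> real"
  assumes "card \<Omega> = 3"
    and "\<forall>A. A \<subseteq> \<Omega> \<longrightarrow> 0 \<le> v0 A"
    and "non_decreasing_on \<Omega> v0"
    and "v0 {} = 0"
  shows "(\<forall>n\<ge>1. \<forall>A. A \<subseteq> \<Omega> \<longrightarrow> ((next_v \<Omega> ^^ n) v0) A = ((next_v \<Omega> ^^ 1) v0) A)
         \<and> submodular_on \<Omega> ((next_v \<Omega> ^^ 1) v0)"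
proof -
  obtain a b c where "\<Omega> = {a,b,c}" "a \<noteq> b" "b \<noteq> c" "a \<noteq> c"
    using assms(1) unfolding card_3_iff by blast
  then have P0: "perm3 \<Omega> a b c" unfolding perm3_def by auto
  define v1 where "v1 = next_v \<Omega> v0"
  have one: "(next_v \<Omega> ^^ 1) v0 = v1" unfolding v1_def by simp
  have mono1: "non_decreasing_on \<Omega> v1" and z1: "v1 {} = 0"
    using next_props[OF P0 assms(3) assms(4)] unfolding v1_def by auto
  have sm1: "submodular_on \<Omega> v1"
  proof (rule submod_from3[where w=v1, OF P0 z1])
    fix p q r assume P: "perm3 \<Omega> p q r"
    show "v1 {p,q} \<le> v1 {p} + v1 {q} \<and> v1 \<Omega> \<le> v1 {p} + v1 {q,r}
            \<and> v1 \<Omega> + v1 {p} \<le> v1 {p,q} + v1 {p,r}"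
      using v1_facts[OF P0 assms(3) assms(4) P] unfolding v1_def by auto
  qed
  have fix1: "\<forall>A. A \<subseteq> \<Omega> \<longrightarrow> next_v \<Omega> v1 A = v1 A"
    using fixpoint[OF P0 mono1 z1 sm1] by auto
  have "\<forall>A. A \<subseteq> \<Omega> \<longrightarrow> ((next_v \<Omega> ^^ n) v0) A = v1 A" if "n \<ge> 1" for n
    using that
  proof (induction n rule: nat_induct_at_least)
    case base then show ?case using one by simp
  next
    case (Suc n)
    have "(next_v \<Omega> ^^ Suc n) v0 = next_v \<Omega> ((next_v \<Omega> ^^ n) v0)" by simp
    also have "\<dots> = next_v \<Omega> v1" by (rule next_congr) (use Suc.IH in auto)
    finally show ?case using fix1 by simp
  qed
  then show ?thesis using one sm1 by simp
qed

end
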